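(* Let $\equiv_2$ be the equivalence relation on $\mathfrak S_n$ generated by the relations $bac\equiv_2 bca$ and $abc\equiv_2 acb$ for letters $a<b<c$ in three consecutive positions. Then two permutations of $\mathfrak S_n$ are $\equiv_2$-equivalent if and only if they have the same left-to-right minima (the same sequence of values $\sigma_j$ such that all letters to the left of $\sigma_j$ are greater than $\sigma_j$).
   Context: Permutations are words $\sigma_1\cdots\sigma_n$; the relations replace three adjacent letters forming one pattern by the same letters arranged as the other pattern, and conversely. *)

theory Defs
  imports Main
begin

definition is_perm :: "nat \<Rightarrow> nat list \<Rightarrow> bool" where
  "is_perm n w \<longleftrightarrow> distinct w \<and> set w = {1..n}"

inductive step2 :: "nat list \<Rightarrow> nat list \<Rightarrow> bool" where
  rule_bac: "a < b \<Longrightarrow> b < c \<Longrightarrow> step2 (u @ [b, a, c] @ v) (u @ [b, c, a] @ v)"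
| rule_abc: "a < b \<Longrightarrow> b < c \<Longrightarrow> step2 (u @ [a, b, c] @ v) (u @ [a, c, b] @ v)"

definition equiv2 :: "nat list \<Rightarrow> nat list \<Rightarrow> bool" where
  "equiv2 = equivclp step2"

definition ltr_minima :: "nat list \<Rightarrow> nat list" where
  "ltr_minima w = [w ! j. j \<leftarrow> [0..<length w], \<forall>i<j. w ! i > w ! j]"

end

theory Submission imports Defs begin
lemma lm_snoc: "ltr_minima (w@[x]) = ltr_minima w @ (if (\<forall>y\<in>set w. x<y) then [x] else [])"
proof -
  have A: "map (\<lambda>j. if \<forall>i<j. (w@[x]) ! i > (w@[x]) ! j then [(w@[x]) ! j] else []) [0..<length w]
      = map (\<lambda>j. if \<forall>i<j. w ! i > w ! j then [w ! j] else []) [0..<length w]"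
    by (rule map_cong) (auto simp: nth_append)
  have B: "(\<forall>i<length w. (w@[x]) ! i > (w@[x]) ! length w) = (\<forall>y\<in>set w. x<y)"
    by (simp add: nth_append all_set_conv_all_nth)
  have C: "ltr_minima (w@[x]) = concat (map (\<lambda>j. if \<forall>i<j. (w@[x]) ! i > (w@[x]) ! j then [(w@[x]) ! j] else []) [0..<length w])
     @ (if \<forall>i<length w. (w@[x]) ! i > (w@[x]) ! length w then [(w@[x]) ! length w] else [])"
    unfolding ltr_minima_def by simp
  have D: "ltr_minima w = concat (map (\<lambda>j. if \<forall>i<j. w ! i > w ! j then [w ! j] else []) [0..<length w])"
    unfolding ltr_minima_def by simp
  show ?thesis unfolding C D A B by simp
qed

lemma lm_app: "ltr_minima A = ltr_minima B \<Longrightarrow> set A = set B \<Longrightarrow> ltr_minima (A@v) = ltr_minima (B@v)"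
proof (induction v rule: rev_induct)
  case Nil then show ?case by simp
next
  case (snoc x xs)
  then show ?case using lm_snoc[of "A@xs" x] lm_snoc[of "B@xs" x] by (simp add: append_assoc[symmetric] del: append_assoc)
qed

lemma step2_lm: "step2 p q \<Longrightarrow> ltr_minima p = ltr_minima q"
proof (induction rule: step2.induct)
  case (rule_bac a b c u v)
  have "ltr_minima (u@[b,a,c]) = ltr_minima (u@[b,c,a])"
  proof -
    have e: "u@[b,a,c] = ((u@[b])@[a])@[c]" "u@[b,c,a] = ((u@[b])@[c])@[a]" by simp_all
    show ?thesis unfolding e lm_snoc using rule_bac by auto
  qed
  from lm_app[OF this, of v] show ?case by auto
next
  case (rule_abc a b c u v)
  have "ltr_minima (u@[a,b,c]) = ltr_minima (u@[a,c,b])"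
  proof -
    have e: "u@[a,b,c] = ((u@[a])@[b])@[c]" "u@[a,c,b] = ((u@[a])@[c])@[b]" by simp_all
    show ?thesis unfolding e lm_snoc using rule_abc by auto
  qed
  from lm_app[OF this, of v] show ?case by auto
qed

lemma equiv2_lm: "equiv2 p q \<Longrightarrow> ltr_minima p = ltr_minima q"
  unfolding equiv2_def
  by (induction rule: equivclp_induct) (auto dest: step2_lm)

lemma step2_ctx: "step2 A B \<Longrightarrow> step2 (u@A@v) (u@B@v)"
proof (induction rule: step2.induct)
  case (rule_bac a b c x y)
  then show ?case using step2.rule_bac[of a b c "u@x" "y@v"] by simp
next
  case (rule_abc a b c x y)
  then show ?case using step2.rule_abc[of a b c "u@x" "y@v"] by simp
qed

lemma equiv2_ctx: "equiv2 A B \<Longrightarrow> equiv2 (u@A@v) (u@B@v)"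
  unfolding equiv2_def
proof (induction rule: equivclp_induct)
  case base then show ?case by simp
next
  case (step y z)
  then show ?case
    by (meson equivclp_into_equivclp step2_ctx)
qed

lemma move_max: "u \<noteq> [] \<Longrightarrow> distinct (u@v) \<Longrightarrow> \<forall>x\<in>set u \<union> set v. x < M
  \<Longrightarrow> equiv2 (u@[M]@v) (u@v@[M])"
proof (induction v arbitrary: u)
  case Nil then show ?case by (simp add: equiv2_def)
next
  case (Cons y v)
  obtain u' z where u: "u = u'@[z]" using Cons.prems(1) by (metis rev_exhaust)
  have zy: "z \<noteq> y" "z < M" "y < M" using Cons.prems u by auto
  have "step2 (u'@[z,y,M]@v) (u'@[z,M,y]@v)"
  proof (cases "y < z")
    case True then show ?thesis using step2.rule_bac[of y z M u' v] zy by simp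
  next
    case False then show ?thesis using step2.rule_abc[of z y M u' v] zy by simp
  qed
  then have 0: "equiv2 (u'@[z,M,y]@v) (u'@[z,y,M]@v)" unfolding equiv2_def
    by (simp add: equivclp_sym r_into_equivclp)
  have 1: "equiv2 (u@[M]@y#v) ((u@[y])@[M]@v)" using 0 unfolding u by simp
  have p1: "u@[y] \<noteq> []" by simp
  have p2: "distinct ((u@[y])@v)" using Cons.prems(2) by simp
  have p3: "\<forall>x\<in>set (u@[y]) \<union> set v. x < M" using Cons.prems(3) by simp
  have 2: "equiv2 ((u@[y])@[M]@v) ((u@[y])@v@[M])"
    using Cons.IH[OF p1 p2 p3] .
  have e: "(u@[y])@v@[M] = u @ (y#v) @ [M]" by simp
  show ?case using 1 2 unfolding e equiv2_def by (rule equivclp_trans)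
qed

lemma lm_cons: "\<forall>y\<in>set xs. y < M \<Longrightarrow> ltr_minima (M#xs) = M # ltr_minima xs"
proof (induction xs rule: rev_induct)
  case Nil
  then show ?case using lm_snoc[of "[]" M] by (simp add: ltr_minima_def)
next
  case (snoc x xs)
  then show ?case using lm_snoc[of "M#xs" x] lm_snoc[of xs x] by auto
qed

lemma lm_hd: "\<exists>r. ltr_minima (y#xs) = y # r"
proof (induction xs rule: rev_induct)
  case Nil
  then show ?case using lm_snoc[of "[]" y] by (simp add: ltr_minima_def)
next
  case (snoc x xs)
  then show ?case using lm_snoc[of "y#xs" x] by auto
qed

lemma equiv2_refl: "equiv2 p p" unfolding equiv2_def by simp
lemma equiv2_sym: "equiv2 p q \<Longrightarrow> equiv2 q p" unfolding equiv2_def by (rule equivclp_sym)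
lemma equiv2_trans: "equiv2 p q \<Longrightarrow> equiv2 q r \<Longrightarrow> equiv2 p r" unfolding equiv2_def by (rule equivclp_trans)

lemma remove_max:
  assumes "distinct p" "p = y#p'" "y \<noteq> M" "M \<in> set p" "\<forall>x\<in>set p. x \<le> M"
  obtains P2 where "equiv2 p (P2@[M])" "ltr_minima P2 = ltr_minima p"
    "set P2 = set p - {M}" "distinct P2" "length P2 < length p"
proof -
  have "M \<in> set p'" using assms(2,3,4) by simp
  then obtain a b where ab: "p' = a@M#b" by (metis split_list)
  have pe: "p = (y#a)@[M]@b" using assms(2) ab by simp
  have dd: "distinct ((y#a)@[M]@b)" using assms(1) pe by simp
  have lt: "\<forall>x\<in>set (y#a) \<union> set b. x < M"
  proof
    fix x assume x: "x \<in> set (y#a) \<union> set b"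
    then have "x \<in> set p" using pe by auto
    then have "x \<le> M" using assms(5) by blast
    moreover have "x \<noteq> M" using x dd by auto
    ultimately show "x < M" by simp
  qed
  have d: "distinct ((y#a)@b)" using dd by simp
  have e1: "equiv2 p ((y#a)@b@[M])"
    unfolding pe by (rule move_max) (use lt d in auto)
  have l1: "ltr_minima (((y#a)@b)@[M]) = ltr_minima ((y#a)@b)"
    using lm_snoc[of "(y#a)@b" M] lt by auto
  have l2: "ltr_minima ((y#a)@b) = ltr_minima p"
    using equiv2_lm[OF e1] l1 by simp
  have s: "set ((y#a)@b) = set p - {M}" using dd unfolding pe by auto
  have len: "length ((y#a)@b) < length p" unfolding pe by simp
  have e2: "equiv2 p (((y#a)@b)@[M])" using e1 by simp
  show ?thesis using that[OF e2 l2 s d len] .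
qed

lemma backdir: "length p = N \<Longrightarrow> distinct p \<Longrightarrow> distinct q \<Longrightarrow> set p = set q
  \<Longrightarrow> ltr_minima p = ltr_minima q \<Longrightarrow> equiv2 p q"
proof (induction N arbitrary: p q rule: less_induct)
  case (less N)
  show ?case
  proof (cases p)
    case Nil
    then show ?thesis using less.prems equiv2_refl by auto
  next
    case (Cons y p')
    then obtain z q' where q: "q = z#q'" using less.prems by (cases q) auto
    have yz: "y = z" using lm_hd[of y p'] lm_hd[of z q'] less.prems(5) Cons q by auto
    obtain M where Mp: "M \<in> set p" "\<forall>x\<in>set p. x \<le> M"
      using Cons by (metis List.finite_set Max_ge Max_in list.set_intros(1) empty_iff)
    have Mq: "M \<in> set q" "\<forall>x\<in>set q. x \<le> M" using Mp less.prems(4) by auto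
    show ?thesis
    proof (cases "y = M")
      case True
      have dp: "distinct (y#p')" using less.prems(2) Cons by simp
      have dq: "distinct (y#q')" using less.prems(3) q yz by simp
      have lp: "\<forall>x\<in>set p'. x < y"
      proof
        fix x assume x: "x \<in> set p'"
        then have "x \<le> M" using Mp Cons by simp
        moreover have "x \<noteq> y" using x dp by auto
        ultimately show "x < y" using True by simp
      qed
      have lq: "\<forall>x\<in>set q'. x < y"
      proof
        fix x assume x: "x \<in> set q'"
        then have "x \<le> M" using Mq q by simp
        moreover have "x \<noteq> y" using x dq by auto
        ultimately show "x < y" using True by simp
      qed
      have "ltr_minima p' = ltr_minima q'"
        using lm_cons[OF lp] lm_cons[OF lq] less.prems(5) Cons q yz by simp
      moreover have "set p' = set q'"
      proof -
        have "set (y#p') = set (y#q')" using less.prems(4) Cons q yz by simp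
        then show ?thesis using dp dq by auto
      qed
      moreover have "length p' < N" using less.prems(1) Cons by simp
      moreover have "distinct p'" "distinct q'" using dp dq by simp_all
      ultimately have "equiv2 p' q'"
        using less.IH by blast
      then have "equiv2 ([y]@p'@[]) ([y]@q'@[])" by (rule equiv2_ctx)
      then show ?thesis using Cons q yz by simp
    next
      case False
      obtain P2 where P: "equiv2 p (P2@[M])" "ltr_minima P2 = ltr_minima p"
        "set P2 = set p - {M}" "distinct P2" "length P2 < length p"
        using remove_max[OF less.prems(2) Cons False Mp] by blast
      have F2: "z \<noteq> M" using False yz by simp
      obtain Q2 where Q: "equiv2 q (Q2@[M])" "ltr_minima Q2 = ltr_minima q"
        "set Q2 = set q - {M}" "distinct Q2"
        using remove_max[OF less.prems(3) q F2 Mq] by blast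
      have "length P2 < N" using P(5) less.prems(1) by simp
      moreover have "set P2 = set Q2" using P(3) Q(3) less.prems(4) by simp
      moreover have "ltr_minima P2 = ltr_minima Q2" using P(2) Q(2) less.prems(5) by simp
      ultimately have "equiv2 P2 Q2"
        using less.IH P(4) Q(4) by blast
      then have "equiv2 ([]@P2@[M]) ([]@Q2@[M])" by (rule equiv2_ctx)
      then have "equiv2 (P2@[M]) (Q2@[M])" by simp
      then show ?thesis using P(1) Q(1) by (meson equiv2_sym equiv2_trans)
    qed
  qed
qed

theorem mainTheorem11:
  fixes n :: nat and p q :: "nat list"
  assumes "is_perm n p" and "is_perm n q"
  shows "equiv2 p q \<longleftrightarrow> ltr_minima p = ltr_minima q"
proof
  assume "equiv2 p q" then show "ltr_minima p = ltr_minima q" by (rule equiv2_lm)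
next
  assume h: "ltr_minima p = ltr_minima q"
  have "distinct p" "distinct q" "set p = set q" using assms unfolding is_perm_def by auto
  then show "equiv2 p q" using backdir[of p "length p" q] h by blast
qed

end
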